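(* Let $(X,\mathcal{A})$ be a $(v,k,\lambda)$-BIBD with $k\ge 2$, and let $r=\lambda(v-1)/(k-1)$. If $(X,\mathcal{A})$ has a weak nesting $\phi:\mathcal{A}\to Y$ into a partial $(w,k+1,\lambda+1)$-BIBD, where $X\subseteq Y$ and $|Y|=w$, then \[ w\ \ge\ \frac{r}{\lambda+1}+\frac{v+2\lambda v+1}{2(\lambda+1)}. \]
   Context: A $(v,k,\lambda)$-BIBD is a pair $(X,\mathcal{A})$ where $X$ is a set of $v$ points and $\mathcal{A}$ is a multiset of $k$-subsets of $X$ (blocks) such that every pair of distinct points lies in exactly $\lambda$ blocks. A partial $(w,k,\lambda)$-BIBD is defined in the same way on $w$ points, except that every pair lies in at most $\lambda$ blocks. Given a $(v,k,\lambda)$-BIBD $(X,\mathcal{A})$ and a set $Y\supseteq X$ with $|Y|=w$, a map $\phi:\mathcal{A}\to Y$ is a weak nesting if $\phi(A)\notin A$ for every block $A$ and the multiset $\{A\cup\{\phi(A)\}:A\in\mathcal{A}\}$ is a partial $(w,k+1,\lambda+1)$-BIBD on $Y$. *)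

theory Defs
  imports Complex_Main "HOL-Library.Multiset"
begin

definition pair_count :: "'a set multiset \<Rightarrow> 'a \<Rightarrow> 'a \<Rightarrow> nat" where
  "pair_count \<B> x y = size (filter_mset (\<lambda>A. x \<in> A \<and> y \<in> A) \<B>)"

definition is_BIBD :: "'a set \<Rightarrow> 'a set multiset \<Rightarrow> nat \<Rightarrow> nat \<Rightarrow> nat \<Rightarrow> bool" where
  "is_BIBD X \<B> v k lam \<longleftrightarrow>
     finite X \<and> card X = v \<and>
     (\<forall>A\<in>#\<B>. A \<subseteq> X \<and> card A = k) \<and>
     (\<forall>x\<in>X. \<forall>y\<in>X. x \<noteq> y \<longrightarrow> pair_count \<B> x y = lam)"

definition is_partial_BIBD :: "'a set \<Rightarrow> 'a set multiset \<Rightarrow> nat \<Rightarrow> nat \<Rightarrow> nat \<Rightarrow> bool" where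
  "is_partial_BIBD Y \<B> w k lam \<longleftrightarrow>
     finite Y \<and> card Y = w \<and>
     (\<forall>A\<in>#\<B>. A \<subseteq> Y \<and> card A = k) \<and>
     (\<forall>x\<in>Y. \<forall>y\<in>Y. x \<noteq> y \<longrightarrow> pair_count \<B> x y \<le> lam)"

(* Blocks are indexed by a finite set I (B i is the block with index i), so the
   block multiset is image_mset B (mset_set I); the nesting map phi is defined
   per block occurrence (index). phi is a weak nesting of the (v,k,lambda)-BIBD
   (X, blocks) into Y, |Y| = w. *)
definition weak_nesting ::
  "'a set \<Rightarrow> 'i set \<Rightarrow> ('i \<Rightarrow> 'a set) \<Rightarrow> nat \<Rightarrow> nat \<Rightarrow> 'a set \<Rightarrow> nat \<Rightarrow> ('i \<Rightarrow> 'a) \<Rightarrow> bool" where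
  "weak_nesting X I B k lam Y w \<phi> \<longleftrightarrow>
     X \<subseteq> Y \<and>
     (\<forall>i\<in>I. \<phi> i \<in> Y \<and> \<phi> i \<notin> B i) \<and>
     is_partial_BIBD Y (image_mset (\<lambda>i. insert (\<phi> i) (B i)) (mset_set I)) w (k + 1) (lam + 1)"

end

theory Submission
  imports Defs
begin

lemma pc_card:
  assumes "finite I"
  shows "pair_count (image_mset B (mset_set I)) x y = card {i\<in>I. x \<in> B i \<and> y \<in> B i}"
  using assms by (simp add: pair_count_def filter_mset_image_mset)

lemma card_sum_ind:
  assumes "finite I"
  shows "card {i\<in>I. P i} = (\<Sum>i\<in>I. if P i then 1 else (0::nat))"
  using assms by (simp add: sum.inter_filter[symmetric])

theorem theorem3p1:
  fixes X Y :: "'a set" and I :: "'i set" and B :: "'i \<Rightarrow> 'a set" and \<phi> :: "'i \<Rightarrow> 'a"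
    and v k lam w :: nat
  assumes "finite I"
    and "is_BIBD X (image_mset B (mset_set I)) v k lam"
    and "k \<ge> 2" and "k \<le> v"
    and "weak_nesting X I B k lam Y w \<phi>"
  shows "real w \<ge> (real lam * (real v - 1) / (real k - 1)) / (real lam + 1)
                  + (real v + 2 * real lam * real v + 1) / (2 * (real lam + 1))"
proof -
  note fI = assms(1)
  have fX: "finite X" and cX: "card X = v" and BX: "\<And>i. i \<in> I \<Longrightarrow> B i \<subseteq> X"
    and cB: "\<And>i. i \<in> I \<Longrightarrow> card (B i) = k"
    and lamX: "\<And>x y. x \<in> X \<Longrightarrow> y \<in> X \<Longrightarrow> x \<noteq> y \<Longrightarrow> card {i\<in>I. x \<in> B i \<and> y \<in> B i} = lam"
    using assms(2) fI by (auto simp: is_BIBD_def pc_card)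
  have XY: "X \<subseteq> Y" and phY: "\<And>i. i \<in> I \<Longrightarrow> \<phi> i \<in> Y" and phB: "\<And>i. i \<in> I \<Longrightarrow> \<phi> i \<notin> B i"
    and fY: "finite Y" and cY: "card Y = w"
    and nest: "\<And>x y. x \<in> Y \<Longrightarrow> y \<in> Y \<Longrightarrow> x \<noteq> y \<Longrightarrow>
        card {i\<in>I. x \<in> insert (\<phi> i) (B i) \<and> y \<in> insert (\<phi> i) (B i)} \<le> lam + 1"
    using assms(5) fI by (auto simp: weak_nesting_def is_partial_BIBD_def pc_card[where B="\<lambda>i. insert (\<phi> i) (B i)"])
  define C where "C x y = card {i\<in>I. x \<in> B i \<and> \<phi> i = y}" for x y
  define e where "e i x y = (if x \<in> B i \<and> \<phi> i = y then 1 else (0::nat))" for i x y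
  have Ce: "C x y = (\<Sum>i\<in>I. e i x y)" for x y
    unfolding C_def e_def using card_sum_ind[OF fI] by simp
  have cBe: "card (B i) = (\<Sum>x\<in>X. \<Sum>y\<in>Y. e i x y)" if "i \<in> I" for i
  proof -
    have "(\<Sum>y\<in>Y. e i x y) = (if x \<in> B i then 1 else 0)" for x
      using phY[OF that] fY unfolding e_def by (simp add: sum.delta' if_distrib) 
    hence "(\<Sum>x\<in>X. \<Sum>y\<in>Y. e i x y) = card {x\<in>X. x \<in> B i}"
      using card_sum_ind[OF fX] by simp
    also have "{x\<in>X. x \<in> B i} = B i" using BX[OF that] by auto
    finally show ?thesis by simp
  qed
  have A: "card I * k = (\<Sum>x\<in>X. \<Sum>y\<in>Y. C x y)"
  proof -
    have "card I * k = (\<Sum>i\<in>I. card (B i))" using cB by simp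
    also have "\<dots> = (\<Sum>i\<in>I. \<Sum>x\<in>X. \<Sum>y\<in>Y. e i x y)" using cBe by simp
    also have "\<dots> = (\<Sum>x\<in>X. \<Sum>i\<in>I. \<Sum>y\<in>Y. e i x y)" by (rule sum.swap)
    also have "\<dots> = (\<Sum>x\<in>X. \<Sum>y\<in>Y. \<Sum>i\<in>I. e i x y)" by (rule sum.cong[OF refl], rule sum.swap)
    also have "\<dots> = (\<Sum>x\<in>X. \<Sum>y\<in>Y. C x y)" using Ce by simp
    finally show ?thesis .
  qed
  have Bd: "C x y \<le> lam + 1" if "x \<in> X" "y \<in> Y - X" for x y
  proof -
    have "C x y \<le> card {i\<in>I. x \<in> insert (\<phi> i) (B i) \<and> y \<in> insert (\<phi> i) (B i)}"
      unfolding C_def by (rule card_mono) (use fI in auto)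
    also have "\<dots> \<le> lam + 1" using that XY by (intro nest) auto
    finally show ?thesis .
  qed
  have C0: "C x x = 0" for x
  proof -
    have "{i\<in>I. x \<in> B i \<and> \<phi> i = x} = {}" using phB by auto
    thus ?thesis unfolding C_def by (metis card.empty)
  qed
  have Cp: "C x y + C y x \<le> 1" if "x \<in> X" "y \<in> X" "x \<noteq> y" for x y
  proof -
    let ?S0 = "{i\<in>I. x \<in> B i \<and> y \<in> B i}"
    let ?S1 = "{i\<in>I. x \<in> B i \<and> \<phi> i = y}"
    let ?S2 = "{i\<in>I. y \<in> B i \<and> \<phi> i = x}"
    have "card (?S0 \<union> ?S1 \<union> ?S2) = card ?S0 + card ?S1 + card ?S2"
      using fI phB that(3) by (subst card_Un_disjoint; auto)+
    also have "\<dots> = lam + C x y + C y x" using lamX[OF that] unfolding C_def by simp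
    finally have eq: "card (?S0 \<union> ?S1 \<union> ?S2) = lam + C x y + C y x" .
    have "card (?S0 \<union> ?S1 \<union> ?S2) \<le> card {i\<in>I. x \<in> insert (\<phi> i) (B i) \<and> y \<in> insert (\<phi> i) (B i)}"
      by (rule card_mono) (use fI in auto)
    also have "\<dots> \<le> lam + 1" using that XY by (intro nest) auto
    finally show ?thesis using eq by simp
  qed
  have D: "2 * (\<Sum>x\<in>X. \<Sum>y\<in>X. C x y) \<le> v * (v - 1)"
  proof -
    have "2 * (\<Sum>x\<in>X. \<Sum>y\<in>X. C x y) = (\<Sum>x\<in>X. \<Sum>y\<in>X. C x y) + (\<Sum>x\<in>X. \<Sum>y\<in>X. C y x)"
    proof -
      have "(\<Sum>x\<in>X. \<Sum>y\<in>X. C y x) = (\<Sum>x\<in>X. \<Sum>y\<in>X. C x y)" by (rule sum.swap)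
      thus ?thesis by simp
    qed
    also have "\<dots> = (\<Sum>x\<in>X. \<Sum>y\<in>X. C x y + C y x)" by (simp add: sum.distrib)
    also have "\<dots> \<le> (\<Sum>x\<in>X. \<Sum>y\<in>X. if x = y then 0 else 1)"
      by (intro sum_mono) (use C0 Cp in auto)
    also have "\<dots> = (\<Sum>x\<in>X. card (X - {x}))"
    proof (rule sum.cong[OF refl])
      fix x assume "x \<in> X"
      have "(\<Sum>y\<in>X. if x = y then 0 else 1::nat) = card {y\<in>X. x \<noteq> y}"
        using card_sum_ind[OF fX, of "\<lambda>y. x \<noteq> y"] by (smt (verit) sum.cong)
      also have "{y\<in>X. x \<noteq> y} = X - {x}" by auto
      finally show "(\<Sum>y\<in>X. if x = y then 0 else 1::nat) = card (X - {x})" .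
    qed
    also have "\<dots> = v * (v - 1)" using cX fX by simp
    finally show ?thesis .
  qed
  have E: "(\<Sum>x\<in>X. \<Sum>y\<in>Y-X. C x y) \<le> v * ((w - v) * (lam + 1))"
  proof -
    have "(\<Sum>x\<in>X. \<Sum>y\<in>Y-X. C x y) \<le> card X * (card (Y - X) * (lam + 1))"
    proof -
      have "(\<Sum>x\<in>X. \<Sum>y\<in>Y-X. C x y) \<le> (\<Sum>x\<in>X. \<Sum>y\<in>Y-X. lam + 1)"
        by (intro sum_mono) (use Bd in auto)
      thus ?thesis by simp
    qed
    also have "card (Y - X) = w - v" using XY fY fX cX cY by (simp add: card_Diff_subset)
    finally show ?thesis using cX by simp
  qed
  have F: "(\<Sum>x\<in>X. \<Sum>y\<in>Y. C x y) = (\<Sum>x\<in>X. \<Sum>y\<in>X. C x y) + (\<Sum>x\<in>X. \<Sum>y\<in>Y-X. C x y)"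
    unfolding sum.distrib[symmetric]
    by (rule sum.cong[OF refl]) (metis add.commute sum.subset_diff[OF XY fY])
  have main: "2 * (card I * k) \<le> v * (v - 1) + 2 * (v * ((w - v) * (lam + 1)))"
    using A D E F by linarith
  define d where "d i x y = (if x \<in> B i \<and> y \<in> B i \<and> x \<noteq> y then 1 else (0::nat))" for i x y
  have G: "card I * (k * (k - 1)) = lam * (v * (v - 1))"
  proof -
    have dB: "(\<Sum>x\<in>X. \<Sum>y\<in>X. d i x y) = k * (k - 1)" if "i \<in> I" for i
    proof -
      have "(\<Sum>y\<in>X. d i x y) = (if x \<in> B i then k - 1 else 0)" for x
      proof -
        have "(\<Sum>y\<in>X. d i x y) = card {y\<in>X. x \<in> B i \<and> y \<in> B i \<and> x \<noteq> y}"
          unfolding d_def using card_sum_ind[OF fX] by simp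
        also have "{y\<in>X. x \<in> B i \<and> y \<in> B i \<and> x \<noteq> y} = (if x \<in> B i then B i - {x} else {})"
          using BX[OF that] by auto
        finally show ?thesis using cB[OF that] BX[OF that] fX by (simp add: finite_subset)
      qed
      note h = this
      have "(\<Sum>x\<in>X. \<Sum>y\<in>X. d i x y) = (\<Sum>x\<in>X. (if x \<in> B i then 1 else 0) * (k - 1))"
        by (rule sum.cong[OF refl]) (subst h, simp)
      also have "\<dots> = card {x\<in>X. x \<in> B i} * (k - 1)"
        using card_sum_ind[OF fX, of "\<lambda>x. x \<in> B i"] by (simp add: sum_distrib_right)
      also have "{x\<in>X. x \<in> B i} = B i" using BX[OF that] by auto
      finally show ?thesis using cB[OF that] by simp
    qed
    have dS: "(\<Sum>i\<in>I. d i x y) = (if x = y then 0 else lam)" if "x \<in> X" "y \<in> X" for x y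
    proof (cases "x = y")
      case True then show ?thesis by (simp add: d_def)
    next
      case False
      have "(\<Sum>i\<in>I. d i x y) = card {i\<in>I. x \<in> B i \<and> y \<in> B i}"
        unfolding d_def using card_sum_ind[OF fI] False by simp
      then show ?thesis using lamX[OF that False] False by simp
    qed
    have "card I * (k * (k - 1)) = (\<Sum>i\<in>I. \<Sum>x\<in>X. \<Sum>y\<in>X. d i x y)" using dB by simp
    also have "\<dots> = (\<Sum>x\<in>X. \<Sum>i\<in>I. \<Sum>y\<in>X. d i x y)" by (rule sum.swap)
    also have "\<dots> = (\<Sum>x\<in>X. \<Sum>y\<in>X. \<Sum>i\<in>I. d i x y)" by (rule sum.cong[OF refl], rule sum.swap)
    also have "\<dots> = (\<Sum>x\<in>X. \<Sum>y\<in>X. if x = y then 0 else lam)"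
      by (intro sum.cong refl) (use dS in auto)
    also have "\<dots> = (\<Sum>x\<in>X. lam * card (X - {x}))"
    proof (rule sum.cong[OF refl])
      fix x assume "x \<in> X"
      have "(\<Sum>y\<in>X. if x = y then 0 else lam) = (\<Sum>y\<in>X. lam * (if x \<noteq> y then 1 else 0))"
        by (intro sum.cong refl) auto
      also have "\<dots> = lam * card {y\<in>X. x \<noteq> y}"
        using card_sum_ind[OF fX, of "\<lambda>y. x \<noteq> y"] by (simp add: sum_distrib_left)
      also have "{y\<in>X. x \<noteq> y} = X - {x}" by auto
      finally show "(\<Sum>y\<in>X. if x = y then 0 else lam) = lam * card (X - {x})" .
    qed
    also have "\<dots> = lam * (v * (v - 1))" using cX fX by simp
    finally show ?thesis .
  qed
  have wv: "v \<le> w" using card_mono[OF fY XY] cX cY by simp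
  have v0: "real v > 0" and k1: "real k - 1 > 0" using assms(3,4) by auto
  have Gr: "real (card I) * real k * (real k - 1) = real lam * real v * (real v - 1)"
  proof -
    have "real (card I * (k * (k - 1))) = real (lam * (v * (v - 1)))" using G by simp
    thus ?thesis using assms(3,4) by (simp add: of_nat_diff mult.assoc)
  qed
  have mainr: "2 * (real (card I) * real k) \<le> real v * (real v - 1) + 2 * (real v * ((real w - real v) * (real lam + 1)))"
  proof -
    have "real (2 * (card I * k)) \<le> real (v * (v - 1) + 2 * (v * ((w - v) * (lam + 1))))"
      using main by (simp only: of_nat_le_iff)
    moreover have c1: "real (v-1) = real v - 1" using assms(3,4) by (simp add: of_nat_diff)
    moreover have c2: "real (w-v) = real w - real v" using wv by (simp add: of_nat_diff)
    ultimately show ?thesis by (simp only: of_nat_add of_nat_mult of_nat_numeral of_nat_1)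
  qed
  define r where "r = real lam * (real v - 1) / (real k - 1)"
  have rI: "r * real v = real (card I) * real k"
  proof -
    have "r * real v * (real k - 1) = real (card I) * real k * (real k - 1)"
    proof -
      have "r * (real k - 1) = real lam * (real v - 1)" unfolding r_def using k1 by simp
      hence "r * real v * (real k - 1) = real lam * real v * (real v - 1)"
        by (metis mult.commute mult.left_commute)
      thus ?thesis using Gr by simp
    qed
    thus ?thesis using k1 by simp
  qed
  have "2 * r * real v \<le> real v * ((real v - 1) + 2 * ((real w - real v) * (real lam + 1)))"
    using mainr rI by (simp add: algebra_simps)
  hence r2: "2 * r \<le> (real v - 1) + 2 * ((real w - real v) * (real lam + 1))"
    using v0 by (simp add: mult.commute[of _ "real v"])
  have l0: "real lam + 1 > 0" by simp
  have "r / (real lam + 1) + (real v + 2 * real lam * real v + 1) / (2 * (real lam + 1))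
        = (2 * r + real v + 2 * real lam * real v + 1) / (2 * (real lam + 1))"
  proof -
    have "r / (real lam + 1) = (2 * r) / (2 * (real lam + 1))"
      by (rule mult_divide_mult_cancel_left[symmetric]) simp
    thus ?thesis by (simp add: add_divide_distrib[symmetric] add.assoc)
  qed
  also have "\<dots> \<le> (2 * (real lam + 1) * real w) / (2 * (real lam + 1))"
    by (rule divide_right_mono) (use r2 in \<open>simp_all add: algebra_simps\<close>)
  also have "\<dots> = real w" by simp
  finally show ?thesis unfolding r_def .
qed

end
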